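(* Let $K$ be a simplex in a topological vector space $F$ and let $T:K\to 2^{K}$ be a weakly naturally quasiconvex correspondence. Then $T$ has a fixed point, i.e. there exists $x^*\in K$ with $x^*\in T(x^* )$.
   Context: A simplex is the convex hull of a finite affinely independent set. $\Delta_{n-1}=\{(\lambda_1,\dots,\lambda_n)\in\mathbb{R}^n:\sum_{i=1}^n\lambda_i=1,\ \lambda_i\ge 0\}$. Weakly naturally quasiconvex (WNQ): let $X,Y$ be nonempty convex subsets of topological vector spaces. A correspondence $T:X\to 2^{Y}$ is weakly naturally quasiconvex if for each $n\in\mathbb{N}$ and each finite set $\{x_1,\dots,x_n\}\subset X$ there exist $y_i\in T(x_i)$ ($i=1,\dots,n$) and a bijection $g:\Delta_{n-1}\to\Delta_{n-1}$ (depending on $x_1,\dots,x_n$) of the form $g(\lambda_1,\dots,\lambda_n)=(g_1(\lambda_1),\dots,g_n(\lambda_n))$, where each $g_i:[0,1]\to[0,1]$ is continuous with $g_i(0)=0$ and $g_i(1)=1$, such that for every $(\lambda_1,\dots,\lambda_n)\in\Delta_{n-1}$ we have $\sum_{i=1}^n g_i(\lambda_i)y_i\in T\big(\sum_{i=1}^n\lambda_i x_i\big)$. *)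

theory Defs
  imports "HOL-Analysis.Analysis"
begin

class topological_real_vector = real_vector + topological_space +
  assumes continuous_add_tvs:
    "\<And>a b U. open U \<Longrightarrow> a + b \<in> U \<Longrightarrow>
       \<exists>V W. open V \<and> open W \<and> a \<in> V \<and> b \<in> W \<and> (\<forall>v\<in>V. \<forall>w\<in>W. v + w \<in> U)"
  assumes continuous_scaleR_tvs:
    "\<And>c a U. open U \<Longrightarrow> c *\<^sub>R a \<in> U \<Longrightarrow>
       \<exists>e>0. \<exists>W. open W \<and> a \<in> W \<and> (\<forall>t. \<bar>t - c\<bar> < e \<longrightarrow> (\<forall>w\<in>W. t *\<^sub>R w \<in> U))"

definition is_simplex :: "'a::real_vector set \<Rightarrow> bool" where
  "is_simplex K \<longleftrightarrow> (\<exists>S. finite S \<and> \<not> affine_dependent S \<and> K = convex hull S)"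

definition std_simplex :: "nat \<Rightarrow> (nat \<Rightarrow> real) set" where
  "std_simplex n = {l. (\<forall>i<n. 0 \<le> l i) \<and> (\<forall>i. n \<le> i \<longrightarrow> l i = 0) \<and> (\<Sum>i<n. l i) = 1}"

text \<open>Weakly naturally quasiconvex correspondence T : X -> 2^Y.  The finite set
  {x_0,...,x_(n-1)} is given by an injective enumeration.\<close>
definition weakly_nat_quasiconvex ::
    "'a::topological_real_vector set \<Rightarrow> 'b::topological_real_vector set \<Rightarrow> ('a \<Rightarrow> 'b set) \<Rightarrow> bool" where
  "weakly_nat_quasiconvex X Y T \<longleftrightarrow>
     (\<forall>x\<in>X. T x \<subseteq> Y) \<and>
     (\<forall>n::nat. \<forall>x::nat \<Rightarrow> 'a. inj_on x {..<n} \<and> x ` {..<n} \<subseteq> X \<longrightarrow>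
        (\<exists>y::nat \<Rightarrow> 'b. \<exists>g::nat \<Rightarrow> real \<Rightarrow> real.
           (\<forall>i<n. y i \<in> T (x i)) \<and>
           (\<forall>i<n. continuous_on {0..1} (g i) \<and> g i ` {0..1} \<subseteq> {0..1} \<and> g i 0 = 0 \<and> g i 1 = 1) \<and>
           bij_betw (\<lambda>l. \<lambda>i. if i < n then g i (l i) else 0) (std_simplex n) (std_simplex n) \<and>
           (\<forall>l\<in>std_simplex n. (\<Sum>i<n. g i (l i) *\<^sub>R y i) \<in> T (\<Sum>i<n. l i *\<^sub>R x i))))"

end

theory Submission
  imports Defs "Jordan_Normal_Form.Determinant"
begin

lemma kernel_exists:
  fixes a :: "nat \<Rightarrow> nat \<Rightarrow> real"
  assumes "m > 0" "\<forall>i<m. (\<Sum>j<m. a i j) = 1"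
  shows "\<exists>u. (\<exists>j<m. u j \<noteq> 0) \<and> (\<forall>j<m. (\<Sum>i<m. u i * a i j) = u j)"
proof -
  define B :: "real mat" where "B = mat m m (\<lambda>(i,j). a i j - (if i = j then 1 else 0))"
  have Bc: "B \<in> carrier_mat m m" unfolding B_def by simp
  have "B *\<^sub>v (vec m (\<lambda>_. 1)) = 0\<^sub>v m"
  proof
    show "dim_vec (B *\<^sub>v vec m (\<lambda>_. 1)) = dim_vec (0\<^sub>v m)" using Bc by simp
    fix i assume "i < dim_vec (0\<^sub>v m)"
    hence i: "i < m" by simp
    have "vec_index (B *\<^sub>v vec m (\<lambda>_. 1)) i = (\<Sum>j<m. a i j - (if i = j then 1 else 0))"
      using i unfolding B_def by (simp add: index_mult_mat_vec scalar_prod_def lessThan_atLeast0)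
    also have "\<dots> = 0" using i assms(2) by (simp add: sum_subtractf)
    finally show "vec_index (B *\<^sub>v vec m (\<lambda>_. 1)) i = vec_index (0\<^sub>v m) i" using i by simp
  qed
  moreover have "vec m (\<lambda>_. (1::real)) \<noteq> 0\<^sub>v m"
    using assms(1) by (metis index_vec index_zero_vec(1) zero_neq_one)
  ultimately have "Determinant.det B = 0"
    using det_0_iff_vec_prod_zero_field[OF Bc] vec_carrier[of m "\<lambda>_. 1"] by blast
  hence "Determinant.det (transpose_mat B) = 0" using det_transpose[OF Bc] by simp
  then obtain v where v: "v \<in> carrier_vec m" "v \<noteq> 0\<^sub>v m" "transpose_mat B *\<^sub>v v = 0\<^sub>v m"
    using det_0_iff_vec_prod_zero_field[of "transpose_mat B" m] Bc by auto
  show ?thesis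
  proof (intro exI[of _ "vec_index v"] conjI allI impI)
    show "\<exists>j<m. vec_index v j \<noteq> 0"
      using v(1,2) by (metis carrier_vecD eq_vecI index_zero_vec(1,2))
    fix j assume j: "j < m"
    have "vec_index (transpose_mat B *\<^sub>v v) j = 0" using v(3) j by simp
    moreover have "vec_index (transpose_mat B *\<^sub>v v) j = (\<Sum>i<m. (a i j - (if i = j then 1 else 0)) * vec_index v i)"
      using j v(1) unfolding B_def by (simp add: index_mult_mat_vec scalar_prod_def lessThan_atLeast0)
    moreover have "(\<Sum>i<m. (a i j - (if i = j then 1 else 0)) * vec_index v i) = (\<Sum>i<m. vec_index v i * a i j) - vec_index v j"
    proof -
      have "(\<Sum>i<m. (a i j - (if i = j then 1 else 0)) * vec_index v i) = (\<Sum>i<m. vec_index v i * a i j) - (\<Sum>i<m. (if i = j then 1 else 0) * vec_index v i)"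
        by (subst sum_subtractf[symmetric]) (rule sum.cong, auto simp: algebra_simps)
      moreover have "(\<Sum>i<m. (if i = j then 1 else 0) * vec_index v i) = vec_index v j"
        using j by (subst sum.cong[OF refl, of _ _ "\<lambda>i. if i = j then vec_index v i else 0"]) auto
      ultimately show ?thesis by simp
    qed
    ultimately show "(\<Sum>i<m. vec_index v i * a i j) = vec_index v j" by simp
  qed
qed

lemma pos_part_fixed:
  fixes a :: "nat \<Rightarrow> nat \<Rightarrow> real" and u :: "nat \<Rightarrow> real"
  assumes nn: "\<forall>i<m. \<forall>j<m. a i j \<ge> 0" and rows: "\<forall>i<m. (\<Sum>j<m. a i j) = 1"
    and fx: "\<forall>j<m. (\<Sum>i<m. u i * a i j) = u j"
  shows "\<forall>j<m. (\<Sum>i<m. max (u i) 0 * a i j) = max (u j) 0"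
proof -
  define p where "p i = max (u i) 0" for i
  have ge: "(\<Sum>i<m. p i * a i j) \<ge> p j" if j: "j < m" for j
  proof -
    have "(\<Sum>i<m. p i * a i j) \<ge> (\<Sum>i<m. u i * a i j)"
      by (rule sum_mono) (use nn j in \<open>auto simp: p_def intro!: mult_right_mono\<close>)
    moreover have "(\<Sum>i<m. p i * a i j) \<ge> 0"
      by (rule sum_nonneg) (use nn j in \<open>auto simp: p_def\<close>)
    ultimately show ?thesis using fx j by (auto simp: p_def)
  qed
  have tot: "(\<Sum>j<m. (\<Sum>i<m. p i * a i j)) = (\<Sum>i<m. p i)"
  proof -
    have "(\<Sum>j<m. (\<Sum>i<m. p i * a i j)) = (\<Sum>i<m. p i * (\<Sum>j<m. a i j))"
      by (subst sum.swap) (simp add: sum_distrib_left)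
    also have "\<dots> = (\<Sum>i<m. p i)" using rows by simp
    finally show ?thesis .
  qed
  have "(\<Sum>j<m. ((\<Sum>i<m. p i * a i j) - p j)) = 0"
    using tot by (simp add: sum_subtractf)
  moreover have "\<forall>j\<in>{..<m}. (\<Sum>i<m. p i * a i j) - p j \<ge> 0" using ge by auto
  ultimately have "\<forall>j\<in>{..<m}. (\<Sum>i<m. p i * a i j) - p j = 0"
    by (subst (asm) sum_nonneg_eq_0_iff) auto
  thus ?thesis by (auto simp: p_def)
qed

lemma stationary:
  fixes a :: "nat \<Rightarrow> nat \<Rightarrow> real"
  assumes m: "m > 0" and nn: "\<forall>i<m. \<forall>j<m. a i j \<ge> 0" and rows: "\<forall>i<m. (\<Sum>j<m. a i j) = 1"
  shows "\<exists>l. (\<forall>i<m. l i \<ge> 0) \<and> (\<Sum>i<m. l i) = 1 \<and> (\<forall>j<m. (\<Sum>i<m. l i * a i j) = l j)"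
proof -
  obtain u where u: "\<exists>j<m. u j \<noteq> 0" "\<forall>j<m. (\<Sum>i<m. u i * a i j) = u j"
    using kernel_exists[OF m rows] by blast
  obtain w where w: "\<exists>j<m. w j > 0" "\<forall>j<m. (\<Sum>i<m. w i * a i j) = w j"
  proof (cases "\<exists>j<m. u j > 0")
    case True thus ?thesis using that u(2) by blast
  next
    case False
    hence "\<exists>j<m. - u j > 0" using u(1) by force
    moreover have "\<forall>j<m. (\<Sum>i<m. - u i * a i j) = - u j"
      using u(2) by (simp add: sum_negf)
    ultimately show ?thesis using that[of "\<lambda>i. - u i"] by blast
  qed
  define p where "p i = max (w i) 0" for i
  have pf: "\<forall>j<m. (\<Sum>i<m. p i * a i j) = p j"
    using pos_part_fixed[OF nn rows w(2)] by (simp add: p_def)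
  obtain j0 where j0: "j0 < m" "w j0 > 0" using w(1) by blast
  have pnn: "\<forall>i<m. p i \<ge> 0" by (simp add: p_def)
  have "p j0 \<le> (\<Sum>i<m. p i)"
    by (rule member_le_sum) (use j0 pnn in auto)
  hence s: "(\<Sum>i<m. p i) > 0" using j0 by (simp add: p_def)
  define s where "s = (\<Sum>i<m. p i)"
  show ?thesis
  proof (intro exI[of _ "\<lambda>i. p i / s"] conjI allI impI)
    show "\<And>i. i < m \<Longrightarrow> 0 \<le> p i / s" using pnn s by (simp add: s_def)
    show "(\<Sum>i<m. p i / s) = 1" using s by (simp add: s_def sum_divide_distrib[symmetric])
    fix j assume j: "j < m"
    have "(\<Sum>i<m. p i / s * a i j) = (\<Sum>i<m. p i * a i j) / s"
      by (simp add: sum_divide_distrib)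
    thus "(\<Sum>i<m. p i / s * a i j) = p j / s" using pf j by simp
  qed
qed

lemma cauchy_mono:
  fixes phi :: "real \<Rightarrow> real"
  assumes rng: "phi ` {0..1} \<subseteq> {0..1}" and one: "phi 1 = 1"
    and add: "\<And>a b. 0 \<le> a \<Longrightarrow> 0 \<le> b \<Longrightarrow> a + b \<le> 1 \<Longrightarrow> phi (a + b) = phi a + phi b"
  shows "t \<in> {0..1} \<Longrightarrow> phi t = t"
proof -
  have mono: "phi s \<le> phi t" if "0 \<le> s" "s \<le> t" "t \<le> 1" for s t
  proof -
    have "phi t = phi s + phi (t - s)" using add[of s "t - s"] that by simp
    moreover have "t - s \<in> {0..1}" using that by auto
    hence "phi (t - s) \<ge> 0" using rng by (auto simp: image_subset_iff)
    ultimately show ?thesis by simp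
  qed
  have mult: "phi (real k / real N) = real k * phi (1 / real N)" if "k \<le> N" "N > 0" for k N
    using that(1)
  proof (induction k)
    case 0
    have "phi 0 = phi 0 + phi 0" using add[of 0 0] by simp
    thus ?case by simp
  next
    case (Suc k)
    have "phi (real (Suc k) / real N) = phi (real k / real N + 1 / real N)"
      by (simp add: add_divide_distrib add.commute)
    also have "\<dots> = phi (real k / real N) + phi (1 / real N)"
      using Suc.prems that(2) by (intro add) (auto simp: add_divide_distrib[symmetric] divide_le_eq)
    also have "\<dots> = real (Suc k) * phi (1 / real N)" using Suc by (simp add: algebra_simps)
    finally show ?case .
  qed
  have frac: "phi (real k / real N) = real k / real N" if "k \<le> N" "N > 0" for k N
  proof -
    have "1 = real N * phi (1 / real N)" using mult[of N N] that one by simp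
    hence "phi (1 / real N) = 1 / real N" using that by (simp add: field_simps)
    thus ?thesis using mult[OF that] by simp
  qed
  assume t: "t \<in> {0..1}"
  show "phi t = t"
  proof (cases "t = 1")
    case True thus ?thesis using one by simp
  next
    case False
    hence t1: "t < 1" using t by auto
    have close: "\<bar>phi t - t\<bar> \<le> 1 / real N" if N: "N > 0" for N
    proof -
      define k where "k = nat \<lfloor>real N * t\<rfloor>"
      have k1: "real k \<le> real N * t" using t by (simp add: k_def)
      have k2: "real N * t < real k + 1" using t k_def by linarith
      have "real k < real N" using k2 t1 N
        by (smt (verit) mult_less_cancel_left2 of_nat_0_less_iff k1)
      hence kN: "k + 1 \<le> N" by linarith
      have a: "real k / real N \<le> t" using k1 N by (simp add: divide_le_eq mult.commute)
      have b: "t \<le> real (k + 1) / real N" using k2 N by (simp add: le_divide_eq mult.commute)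
      have "phi (real k / real N) \<le> phi t"
        using a t N by (intro mono) auto
      hence c: "real k / real N \<le> phi t" using frac[of k N] kN N by simp
      have "phi t \<le> phi (real (k+1) / real N)"
        using b t N kN by (intro mono) (auto simp: divide_le_eq)
      hence d: "phi t \<le> real (k+1) / real N" using frac[of "k+1" N] kN N by simp
      have "real (k+1) / real N = real k / real N + 1 / real N" by (simp add: add_divide_distrib)
      thus ?thesis using a b c d by linarith
    qed
    show ?thesis
    proof (rule ccontr)
      assume "phi t \<noteq> t"
      hence e: "\<bar>phi t - t\<bar> > 0" by simp
      obtain N :: nat where N: "N > 1 / \<bar>phi t - t\<bar>" using reals_Archimedean2 by blast
      hence "N > 0" using e by (metis gr0I less_numeral_extra(3) of_nat_0 zero_less_divide_1_iff divide_pos_pos e less_trans not_less_zero)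
      hence "\<bar>phi t - t\<bar> \<le> 1 / real N" using close by blast
      hence "\<bar>phi t - t\<bar> * real N \<le> 1" using \<open>N > 0\<close> by (simp add: le_divide_eq)
      moreover have "1 < real N * \<bar>phi t - t\<bar>" using N e by (simp add: divide_less_eq)
      ultimately show False by (simp add: mult.commute)
    qed
  qed
qed

lemma sum3:
  assumes "finite A" "i \<in> A" "j \<in> A" "k \<in> A" "i \<noteq> j" "i \<noteq> k" "j \<noteq> k"
    and "\<forall>h\<in>A. h \<notin> {i, j, k} \<longrightarrow> F h = 0"
  shows "sum F A = F i + F j + F k"
proof -
  have "sum F A = sum F {i, j, k}"
    by (rule sum.mono_neutral_right) (use assms in auto)
  thus ?thesis using assms by (simp add: add.assoc)
qed

lemma third_index:
  assumes "3 \<le> (n::nat)"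
  shows "\<exists>k<n. k \<noteq> i \<and> k \<noteq> j"
  by (rule exI[of _ "if i \<noteq> 0 \<and> j \<noteq> 0 then 0 else if i \<noteq> 1 \<and> j \<noteq> 1 then 1 else 2"]) (use assms in auto)

lemma g_id:
  fixes g :: "nat \<Rightarrow> real \<Rightarrow> real"
  assumes n: "3 \<le> n"
    and G: "\<forall>i<n. g i ` {0..1} \<subseteq> {0..1} \<and> g i 0 = 0 \<and> g i 1 = 1"
    and H: "\<forall>l\<in>std_simplex n. (\<Sum>i<n. g i (l i)) = 1"
  shows "\<forall>i<n. \<forall>t\<in>{0..1}. g i t = t"
proof -
  have P: "g i a + g j b + g k (1 - a - b) = 1"
    if ijk: "i < n" "j < n" "k < n" "i \<noteq> j" "i \<noteq> k" "j \<noteq> k" and ab: "0 \<le> a" "0 \<le> b" "a + b \<le> 1"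
    for i j k a b
  proof -
    define l where "l h = (if h = i then a else if h = j then b else if h = k then 1 - a - b else 0)" for h
    have "(\<Sum>h<n. l h) = l i + l j + l k"
      by (rule sum3) (use ijk in \<open>auto simp: l_def\<close>)
    hence "l \<in> std_simplex n"
      unfolding std_simplex_def using ijk ab by (auto simp: l_def)
    hence "(\<Sum>h<n. g h (l h)) = 1" using H by blast
    moreover have "(\<Sum>h<n. g h (l h)) = g i (l i) + g j (l j) + g k (l k)"
      by (rule sum3) (use ijk G in \<open>auto simp: l_def\<close>)
    ultimately show ?thesis using ijk by (simp add: l_def)
  qed
  have addij: "g i (a + b) = g i a + g j b"
    if ij: "i < n" "j < n" "i \<noteq> j" and ab: "0 \<le> a" "0 \<le> b" "a + b \<le> 1" for i j a b
  proof -
    obtain k where k: "k < n" "k \<noteq> i" "k \<noteq> j" using third_index[OF n] by blast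
    have 1: "g i a + g j b + g k (1 - a - b) = 1" using P[of i j k a b] ij k ab by auto
    have 2: "g i (a + b) + g j 0 + g k (1 - (a + b) - 0) = 1" using P[of i j k "a + b" 0] ij k ab by auto
    have "g j 0 = 0" using G ij by blast
    thus ?thesis using 1 2 by (simp add: algebra_simps)
  qed
  have eqg: "g i t = g 0 t" if "i < n" "t \<in> {0..1}" for i t
  proof (cases "i = 0")
    case False
    have "g i (0 + t) = g i 0 + g 0 t" using addij[of i 0 0 t] that False n by auto
    moreover have "g i 0 = 0" using G that by blast
    ultimately show ?thesis by simp
  qed simp
  have phi: "g 0 t = t" if "t \<in> {0..1}" for t
  proof (rule cauchy_mono[where phi = "g 0"])
    show "g 0 ` {0..1} \<subseteq> {0..1}" "g 0 1 = 1" using G n by auto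
    show "t \<in> {0..1}" by fact
    fix a b :: real assume ab: "0 \<le> a" "0 \<le> b" "a + b \<le> 1"
    have "g 0 (a + b) = g 0 a + g 1 b" using addij[of 0 1 a b] ab n by auto
    moreover have "g 1 b = g 0 b" using eqg[of 1 b] ab n by auto
    ultimately show "g 0 (a + b) = g 0 a + g 0 b" by simp
  qed
  show ?thesis using eqg phi by simp
qed

lemma sum_restr:
  fixes f :: "nat \<Rightarrow> 'b::comm_monoid_add"
  shows "m \<le> n \<Longrightarrow> (\<Sum>h<n. if h < m then f h else 0) = (\<Sum>h<m. f h)"
proof (induction n)
  case 0 thus ?case by simp
next
  case (Suc n)
  show ?case
  proof (cases "m \<le> n")
    case True thus ?thesis using Suc by simp
  next
    case False
    hence "m = Suc n" using Suc.prems by simp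
    thus ?thesis by (intro sum.cong) auto
  qed
qed

theorem theorem4:
  fixes K :: "'a::topological_real_vector set" and T :: "'a \<Rightarrow> 'a set"
  assumes "K \<noteq> {}" and "is_simplex K"
    and "weakly_nat_quasiconvex K K T"
  shows "\<exists>x\<in>K. x \<in> T x"
proof -
  obtain S where S: "finite S" "K = convex hull S" using assms(2) unfolding is_simplex_def by blast
  have Sne: "S \<noteq> {}" using assms(1) S by auto
  define m where "m = card S"
  have m0: "m > 0" using S(1) Sne by (simp add: m_def card_gt_0_iff)
  obtain v where v: "bij_betw v {..<m} S"
    using ex_bij_betw_nat_finite[OF S(1)] by (auto simp: m_def lessThan_atLeast0)
  have vinj: "inj_on v {..<m}" and vS: "v ` {..<m} = S" using v by (auto simp: bij_betw_def)
  have vinS: "v i \<in> S" if "i < m" for i using vS that by auto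
  have vK: "v i \<in> K" if "i < m" for i using vinS[OF that] S(2) hull_subset[of S convex] by auto
  have W1: "\<forall>x\<in>K. T x \<subseteq> K" using assms(3) unfolding weakly_nat_quasiconvex_def by blast
  have W2: "\<forall>n::nat. \<forall>x::nat \<Rightarrow> 'a. inj_on x {..<n} \<and> x ` {..<n} \<subseteq> K \<longrightarrow>
        (\<exists>y::nat \<Rightarrow> 'a. \<exists>g::nat \<Rightarrow> real \<Rightarrow> real.
           (\<forall>i<n. y i \<in> T (x i)) \<and>
           (\<forall>i<n. continuous_on {0..1} (g i) \<and> g i ` {0..1} \<subseteq> {0..1} \<and> g i 0 = 0 \<and> g i 1 = 1) \<and>
           bij_betw (\<lambda>l. \<lambda>i. if i < n then g i (l i) else 0) (std_simplex n) (std_simplex n) \<and>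
           (\<forall>l\<in>std_simplex n. (\<Sum>i<n. g i (l i) *\<^sub>R y i) \<in> T (\<Sum>i<n. l i *\<^sub>R x i)))"
    using assms(3) unfolding weakly_nat_quasiconvex_def by blast
  show ?thesis
  proof (cases "m = 1")
    case True
    hence "S = {v 0}" using vS by (auto simp: lessThan_Suc)
    hence K: "K = {v 0}" using S(2) by simp
    have "inj_on (\<lambda>_. v 0) {..<1::nat} \<and> (\<lambda>_. v 0) ` {..<1::nat} \<subseteq> K" using K by (auto simp: inj_on_def)
    then obtain y :: "nat \<Rightarrow> 'a" where "y 0 \<in> T (v 0)" using spec[OF spec[OF W2, of 1], of "\<lambda>_. v 0"] by auto
    moreover have "y 0 \<in> K" using calculation W1 K by blast
    ultimately show ?thesis using K by auto
  next
    case False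
    hence m2: "m \<ge> 2" using m0 by simp
    define n where "n = max m 3"
    have mn: "m \<le> n" and n3: "3 \<le> n" by (auto simp: n_def)
    define w where "w = (1/2::real) *\<^sub>R v 0 + (1/2::real) *\<^sub>R v 1"
    define x where "x i = (if i < m then v i else w)" for i
    have v01: "v 0 \<noteq> v 1" using vinj m2 by (auto dest: inj_onD)
    have wK: "w \<in> K" unfolding w_def S(2)
      by (rule convexD) (use vK m2 S(2) in auto)
    have w0: "w \<noteq> v 0"
    proof
      assume "w = v 0"
      hence "2 *\<^sub>R w = 2 *\<^sub>R v 0" by simp
      hence "v 0 + v 1 = v 0 + v 0" by (simp add: w_def scaleR_2 scaleR_right_distrib)
      thus False using v01 by simp
    qed
    have w1: "w \<noteq> v 1"
    proof
      assume "w = v 1"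
      hence "2 *\<^sub>R w = 2 *\<^sub>R v 1" by simp
      hence "v 0 + v 1 = v 1 + v 1" by (simp add: w_def scaleR_2 scaleR_right_distrib)
      thus False using v01 by simp
    qed
    have xinj: "inj_on x {..<n}"
    proof (cases "m \<ge> 3")
      case True
      hence "n = m" by (simp add: n_def)
      thus ?thesis using vinj by (simp add: x_def inj_on_def)
    next
      case False
      hence "m = 2" "n = 3" using m2 by (auto simp: n_def)
      thus ?thesis using v01 w0 w1 by (auto simp: x_def inj_on_def less_Suc_eq numeral_3_eq_3)
    qed
    have xK: "x ` {..<n} \<subseteq> K" using vK wK by (auto simp: x_def)
    obtain y g where Y: "\<forall>i<n. y i \<in> T (x i)"
      and G: "\<forall>i<n. continuous_on {0..1} (g i) \<and> g i ` {0..1} \<subseteq> {0..1} \<and> g i 0 = 0 \<and> g i 1 = 1"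
      and B: "bij_betw (\<lambda>l. \<lambda>i. if i < n then g i (l i) else 0) (std_simplex n) (std_simplex n)"
      and C: "\<forall>l\<in>std_simplex n. (\<Sum>i<n. g i (l i) *\<^sub>R y i) \<in> T (\<Sum>i<n. l i *\<^sub>R x i)"
      using mp[OF spec[OF spec[OF W2, of n], of x] conjI[OF xinj xK]] by blast
    have H: "\<forall>l\<in>std_simplex n. (\<Sum>i<n. g i (l i)) = 1"
    proof
      fix l assume "l \<in> std_simplex n"
      hence "(\<lambda>i. if i < n then g i (l i) else 0) \<in> std_simplex n"
        using B by (auto simp: bij_betw_def)
      thus "(\<Sum>i<n. g i (l i)) = 1" by (simp add: std_simplex_def)
    qed
    have gid: "\<forall>i<n. \<forall>t\<in>{0..1}. g i t = t"
      by (rule g_id[OF n3 _ H]) (use G in blast)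
    have bary: "\<exists>c. (\<forall>z\<in>S. 0 \<le> c z) \<and> sum c S = 1 \<and> (\<Sum>z\<in>S. c z *\<^sub>R z) = y i" if i: "i < m" for i
    proof -
      have "y i \<in> T (x i)" using Y i mn by auto
      moreover have "x i \<in> K" using vK i by (simp add: x_def)
      ultimately have "y i \<in> convex hull S" using W1 S(2) by blast
      thus ?thesis unfolding convex_hull_finite[OF S(1)] by blast
    qed
    define c where "c i = (SOME c. (\<forall>z\<in>S. 0 \<le> c z) \<and> sum c S = 1 \<and> (\<Sum>z\<in>S. c z *\<^sub>R z) = y i)" for i
    have c: "(\<forall>z\<in>S. 0 \<le> c i z) \<and> sum (c i) S = 1 \<and> (\<Sum>z\<in>S. c i z *\<^sub>R z) = y i" if "i < m" for i
      using someI_ex[OF bary[OF that]] unfolding c_def .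
    define a where "a i j = c i (v j)" for i j
    have ann: "\<forall>i<m. \<forall>j<m. a i j \<ge> 0" using c vinS by (auto simp: a_def)
    have arows: "\<forall>i<m. (\<Sum>j<m. a i j) = 1"
    proof (intro allI impI)
      fix i assume i: "i < m"
      have "(\<Sum>j<m. a i j) = sum (c i) (v ` {..<m})"
        using sum.reindex[OF vinj, of "c i"] by (simp add: a_def comp_def)
      thus "(\<Sum>j<m. a i j) = 1" using c[OF i] vS by simp
    qed
    have yv: "y i = (\<Sum>j<m. a i j *\<^sub>R v j)" if i: "i < m" for i
    proof -
      have "(\<Sum>j<m. a i j *\<^sub>R v j) = (\<Sum>z\<in>v ` {..<m}. c i z *\<^sub>R z)"
        using sum.reindex[OF vinj, of "\<lambda>z. c i z *\<^sub>R z"] by (simp add: a_def comp_def)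
      thus ?thesis using c[OF i] vS by simp
    qed
    obtain l where l: "\<forall>i<m. l i \<ge> 0" "(\<Sum>i<m. l i) = 1" "\<forall>j<m. (\<Sum>i<m. l i * a i j) = l j"
      using stationary[OF m0 ann arows] by blast
    define lam where "lam h = (if h < m then l h else 0)" for h
    have lamsum: "(\<Sum>h<n. lam h) = 1" using sum_restr[OF mn, of l] l(2) by (simp add: lam_def)
    have lam_std: "lam \<in> std_simplex n"
      unfolding std_simplex_def using l(1) mn lamsum by (auto simp: lam_def)
    have lamle: "lam h \<in> {0..1}" if "h < n" for h
    proof (cases "h < m")
      case True
      have "l h \<le> (\<Sum>i<m. l i)" by (rule member_le_sum) (use l(1) True in auto)
      thus ?thesis using l True by (simp add: lam_def)
    qed (simp add: lam_def)
    define xs where "xs = (\<Sum>j<m. l j *\<^sub>R v j)"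
    have xsK: "xs \<in> K" unfolding xs_def
      by (rule convex_sum) (use l vK S(2) in auto)
    have e1: "(\<Sum>h<n. lam h *\<^sub>R x h) = xs"
    proof -
      have "(\<Sum>h<n. lam h *\<^sub>R x h) = (\<Sum>h<n. if h < m then l h *\<^sub>R v h else 0)"
        by (intro sum.cong) (auto simp: lam_def x_def)
      thus ?thesis using sum_restr[OF mn, of "\<lambda>h. l h *\<^sub>R v h"] by (simp add: xs_def)
    qed
    have e2: "(\<Sum>h<n. g h (lam h) *\<^sub>R y h) = xs"
    proof -
      have "(\<Sum>h<n. g h (lam h) *\<^sub>R y h) = (\<Sum>h<n. if h < m then l h *\<^sub>R y h else 0)"
        by (intro sum.cong) (use gid lamle in \<open>auto simp: lam_def\<close>)
      also have "\<dots> = (\<Sum>i<m. l i *\<^sub>R y i)" by (rule sum_restr[OF mn])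
      also have "\<dots> = (\<Sum>i<m. \<Sum>j<m. (l i * a i j) *\<^sub>R v j)"
        by (intro sum.cong) (auto simp: yv scaleR_sum_right)
      also have "\<dots> = (\<Sum>j<m. \<Sum>i<m. (l i * a i j) *\<^sub>R v j)" by (rule sum.swap)
      also have "\<dots> = (\<Sum>j<m. (\<Sum>i<m. l i * a i j) *\<^sub>R v j)"
        by (simp add: scaleR_sum_left)
      also have "\<dots> = xs" unfolding xs_def using l(3) by simp
      finally show ?thesis .
    qed
    have "xs \<in> T xs" using C lam_std e1 e2 by metis
    thus ?thesis using xsK by blast
  qed
qed

end
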